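(* Let $\mathbb{F}$ be a field of characteristic zero, let $\mathcal{A}=M_4(\mathbb{F})$ with the transpose involution, and let $\mathcal{L}$ be a Lie skew-ideal of $\mathcal{A}$. If $\mathcal{L}$ is closed under conjugation by elements of $O(4)=\{P\in M_4(\mathbb{F}): PP^t=I\}$, then $\mathcal{L}$ is one of \[ 0,\ \mathcal{Z},\ \mathcal{K},\ [\mathcal{S},\mathcal{K}],\ \mathcal{S},\ \mathcal{Z}+\mathcal{K},\ [\mathcal{A},\mathcal{A}],\ \mathcal{A}. \]
   Context: A Lie skew-ideal of an algebra with involution $\mathcal{A}$ is a subspace $\mathcal{L}$ such that $[x,a]=xa-ax\in\mathcal{L}$ for all $x\in\mathcal{L}$ and all skew-symmetric $a\in\mathcal{A}$. $\mathcal{S}$, $\mathcal{K}$, $\mathcal{Z}$ denote the symmetric, skew-symmetric (w.r.t. transpose) and scalar matrices in $M_4(\mathbb{F})$; for subsets $U,V$, $[U,V]$ is the linear span of $\{uv-vu:u\in U,v\in V\}$. *)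

theory Defs
  imports "HOL-Analysis.Analysis" "HOL-Library.Numeral_Type"
begin

type_synonym 'a M4 = "'a ^ 4 ^ 4"

definition msmult :: "'a::field \<Rightarrow> 'a M4 \<Rightarrow> 'a M4" where
  "msmult c A = (\<chi> i j. c * A $ i $ j)"

definition msubspace :: "'a::field M4 set \<Rightarrow> bool" where
  "msubspace V \<longleftrightarrow> 0 \<in> V \<and> (\<forall>x\<in>V. \<forall>y\<in>V. x + y \<in> V) \<and> (\<forall>c. \<forall>x\<in>V. msmult c x \<in> V)"

definition mspan :: "'a::field M4 set \<Rightarrow> 'a M4 set" where
  "mspan S = \<Inter>{V. msubspace V \<and> S \<subseteq> V}"

definition comm :: "'a::field M4 \<Rightarrow> 'a M4 \<Rightarrow> 'a M4" where
  "comm x y = x ** y - y ** x"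

definition mbracket :: "'a::field M4 set \<Rightarrow> 'a M4 set \<Rightarrow> 'a M4 set" where
  "mbracket U V = mspan {comm u v | u v. u \<in> U \<and> v \<in> V}"

definition symm :: "'a::field M4 set" where
  "symm = {A. transpose A = A}"

definition skew :: "'a::field M4 set" where
  "skew = {A. transpose A = - A}"

definition scalars :: "'a::field M4 set" where
  "scalars = range mat"

definition msum :: "'a::field M4 set \<Rightarrow> 'a M4 set \<Rightarrow> 'a M4 set" where
  "msum U V = {u + v | u v. u \<in> U \<and> v \<in> V}"

definition lie_skew_ideal :: "'a::field M4 set \<Rightarrow> bool" where
  "lie_skew_ideal L \<longleftrightarrow> msubspace L \<and> (\<forall>x\<in>L. \<forall>a\<in>skew. comm x a \<in> L)"

definition orth4 :: "'a::field M4 set" where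
  "orth4 = {P. P ** transpose P = mat 1}"

end

theory Submission imports Defs begin

definition E :: "4 \<Rightarrow> 4 \<Rightarrow> 'a::field M4" where
  "E i j = (\<chi> a b. if a = i \<and> b = j then 1 else 0)"
definition G :: "4 \<Rightarrow> 4 \<Rightarrow> 'a::field M4" where "G i j = E i j + E j i"
definition F :: "4 \<Rightarrow> 4 \<Rightarrow> 'a::field M4" where "F i j = E i j - E j i"

lemma E_nth[simp]: "E i j $ a $ b = (if a = i \<and> b = j then 1 else 0)"
  by (simp add: E_def)

lemma ite01_mult: "(if P then 1 else 0) * (x::'a::field) = (if P then x else 0)"
  "x * (if P then 1 else 0) = (if P then x else 0)" by auto

lemma E_mult_left[simp]: "(E i j ** X) $ a $ b = (if a = i then X $ j $ b else (0::'a::field))"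
  by (auto simp add: matrix_matrix_mult_def ite01_mult)

lemma E_mult_right[simp]: "(X ** E i j) $ a $ b = (if b = j then X $ a $ i else (0::'a::field))"
  by (auto simp add: matrix_matrix_mult_def ite01_mult)

lemma msmult_nth[simp]: "msmult c A $ a $ b = c * A $ a $ b"
  by (simp add: msmult_def)

lemma mm_add_r: "((A::'a::field M4) + B) ** C = A ** C + B ** C"
  by (simp add: matrix_matrix_mult_def vec_eq_iff sum.distrib algebra_simps)
lemma mm_diff_r: "((A::'a::field M4) - B) ** C = A ** C - B ** C"
  by (simp add: matrix_matrix_mult_def vec_eq_iff sum_subtractf algebra_simps)
lemma mm_diff_l: "(C::'a::field M4) ** (A - B) = C ** A - C ** B"
  by (simp add: matrix_matrix_mult_def vec_eq_iff sum_subtractf algebra_simps)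
lemma mm_smult_l: "msmult c (A::'a::field M4) ** B = msmult c (A ** B)"
  by (simp add: matrix_matrix_mult_def vec_eq_iff sum_distrib_left algebra_simps msmult_def)
lemma mm_smult_r: "B ** msmult c (A::'a::field M4) = msmult c (B ** A)"
  by (simp add: matrix_matrix_mult_def vec_eq_iff sum_distrib_left algebra_simps msmult_def)

lemmas mdist = matrix_add_ldistrib mm_add_r mm_diff_r mm_diff_l mm_smult_l mm_smult_r


lemma comm_pair: fixes a b :: "'a::field" assumes "i \<noteq> j"
  shows "comm (msmult a (E i j) + msmult b (E j i)) (F i j) = msmult (a+b) (E j j - E i i)"
  using assms unfolding vec_eq_iff comm_def F_def
  by (auto simp: mdist algebra_simps)

lemma comm_GF: assumes "i \<noteq> j"
  shows "comm (G i j) (F i j) = msmult (2::'a::field) (E j j - E i i)"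
  using assms unfolding vec_eq_iff comm_def F_def G_def
  by (auto simp: mdist algebra_simps)

lemma comm_EF: assumes "i \<noteq> j"
  shows "comm (E j j - E i i) (F i j) = msmult (-2::'a::field) (G i j)"
  using assms unfolding vec_eq_iff comm_def F_def G_def
  by (auto simp: mdist algebra_simps)

lemma comm_EG: assumes "i \<noteq> j"
  shows "comm (E i i) (G i j) = (F i j :: 'a::field M4)"
  using assms unfolding vec_eq_iff comm_def F_def G_def
  by (auto simp: mdist algebra_simps)

lemma comm_EiF: assumes "i \<noteq> j"
  shows "comm (E i i) (F i j) = (G i j :: 'a::field M4)"
  using assms unfolding vec_eq_iff comm_def F_def G_def
  by (auto simp: mdist algebra_simps)

definition dg :: "'a::field M4 \<Rightarrow> 'a M4" where
  "dg x = (\<chi> a b. if a = b then x$a$b else 0)"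

lemma comm_dg: assumes "i \<noteq> j"
  shows "comm (dg x) (F i j) = msmult (x$i$i - x$j$j) (G i j :: 'a::field M4)"
  using assms unfolding vec_eq_iff comm_def F_def G_def
  by (auto simp: mdist algebra_simps dg_def)

lemma ms_zero: "msubspace V \<Longrightarrow> 0 \<in> V" by (simp add: msubspace_def)
lemma ms_add: "msubspace V \<Longrightarrow> x \<in> V \<Longrightarrow> y \<in> V \<Longrightarrow> x + y \<in> V" by (simp add: msubspace_def)
lemma ms_smult: "msubspace V \<Longrightarrow> x \<in> V \<Longrightarrow> msmult c x \<in> V" by (simp add: msubspace_def)
lemma msmult_m1: "msmult (-1) x = - x" by (simp add: vec_eq_iff)
lemma msmult_0: "msmult 0 x = 0" by (simp add: vec_eq_iff)
lemma msmult_1: "msmult 1 x = x" by (simp add: vec_eq_iff)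
lemma msmult_msmult: "msmult c (msmult d x) = msmult (c*d) x" by (simp add: vec_eq_iff)
lemma ms_diff: "msubspace V \<Longrightarrow> x \<in> V \<Longrightarrow> y \<in> V \<Longrightarrow> x - y \<in> V"
  using ms_add[of V x "msmult (-1) y"] ms_smult[of V y "-1"] by (simp add: msmult_m1)
lemma msmult_in: "msubspace V \<Longrightarrow> (c \<noteq> 0 \<Longrightarrow> M \<in> V) \<Longrightarrow> msmult c M \<in> V"
  by (cases "c = 0") (auto simp: msmult_0 ms_zero ms_smult)
lemma ms_unsmult: "msubspace V \<Longrightarrow> msmult c x \<in> V \<Longrightarrow> c \<noteq> 0 \<Longrightarrow> x \<in> V"
  using ms_smult[of V "msmult c x" "inverse c"] by (simp add: msmult_msmult msmult_1)

lemma mspan_sub: "msubspace V \<Longrightarrow> S \<subseteq> V \<Longrightarrow> mspan S \<subseteq> V"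
  unfolding mspan_def by auto
lemma mspan_inc: "S \<subseteq> mspan S" unfolding mspan_def by auto
lemma mspan_subspace: "msubspace (mspan S)"
  unfolding mspan_def msubspace_def by auto
lemma mspan_mono: "S \<subseteq> S' \<Longrightarrow> mspan S \<subseteq> mspan S'"
  unfolding mspan_def by auto

definition tr :: "'a::field M4 \<Rightarrow> 'a" where "tr x = (\<Sum>a\<in>UNIV. x$a$a)"

lemma tr_mult_commute: "tr ((A::'a::field M4) ** B) = tr (B ** A)"
  unfolding tr_def matrix_matrix_mult_def
  by (simp, subst sum.swap, simp add: mult.commute)

lemma tr_comm: "tr (comm A B) = 0"
  using tr_mult_commute[of A B] unfolding comm_def tr_def by (simp add: sum_subtractf)

definition T :: "bool \<Rightarrow> bool \<Rightarrow> bool \<Rightarrow> 'a::field M4 set" where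
  "T z s k = {x. (\<not> k \<longrightarrow> (\<forall>a b. x$a$b = x$b$a))
     \<and> (\<not> s \<longrightarrow> (\<forall>a b. a \<noteq> b \<longrightarrow> x$a$b + x$b$a = 0) \<and> (\<forall>a b. x$a$a = x$b$b))
     \<and> (\<not> z \<longrightarrow> tr x = 0)}"

lemma T_k: "x \<in> T z s k \<Longrightarrow> \<not> k \<Longrightarrow> x$a$b = x$b$a" unfolding T_def by auto
lemma T_s1: "x \<in> T z s k \<Longrightarrow> \<not> s \<Longrightarrow> a \<noteq> b \<Longrightarrow> x$a$b + x$b$a = 0" unfolding T_def by auto
lemma T_s2: assumes "x \<in> T z s k" "\<not> s" shows "x$a$a = x$b$b"
proof -
  have "\<forall>a b. x$a$a = x$b$b" using assms unfolding T_def by auto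
  then show ?thesis by (rule_tac allE, assumption, erule_tac allE)
qed
lemma T_z: "x \<in> T z s k \<Longrightarrow> \<not> z \<Longrightarrow> tr x = 0" unfolding T_def by auto
lemma T_I: assumes h1: "\<not> k \<Longrightarrow> \<forall>a b. x$a$b = x$b$a" and 
   h2: "\<not> s \<Longrightarrow> (\<forall>a b. a \<noteq> b \<longrightarrow> x$a$b + x$b$a = 0) \<and> (\<forall>a b. x$a$a = x$b$b)"
   and h3: "\<not> z \<Longrightarrow> tr x = 0" shows "x \<in> T z s k"
  unfolding T_def mem_Collect_eq
  apply (intro conjI impI)
  apply (erule h1)
  apply (erule h2[THEN conjunct1])
  apply (erule h2[THEN conjunct2])
  apply (erule h3)
  done

lemma tr_add: "tr (x + y) = tr x + tr y" by (simp add: tr_def sum.distrib)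
lemma tr_smult: "tr (msmult c x) = c * tr x" by (simp add: tr_def sum_distrib_left)

lemma T_subspace: "msubspace (T z s k :: 'a::field M4 set)"
  unfolding msubspace_def
proof (intro conjI ballI allI)
  show "0 \<in> T z s k" by (rule T_I) (simp_all add: tr_def)
next
  fix x y :: "'a M4" assume x: "x \<in> T z s k" and y: "y \<in> T z s k"
  show "x + y \<in> T z s k"
  proof (rule T_I)
    show "\<not> k \<Longrightarrow> \<forall>a b. (x + y)$a$b = (x + y)$b$a" using T_k[OF x] T_k[OF y] by simp
    show "\<not> s \<Longrightarrow> (\<forall>a b. a \<noteq> b \<longrightarrow> (x + y)$a$b + (x + y)$b$a = 0) \<and> (\<forall>a b. (x + y)$a$a = (x + y)$b$b)"
    proof -
      assume ns: "\<not> s"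
      have "x$a$b + y$a$b + (x$b$a + y$b$a) = 0" if "a \<noteq> b" for a b
        using T_s1[OF x ns that] T_s1[OF y ns that] by (simp add: algebra_simps)
      moreover have "x$a$a + y$a$a = x$b$b + y$b$b" for a b
        using T_s2[OF x ns, of a b] T_s2[OF y ns, of a b] by simp
      ultimately show ?thesis by simp
    qed
    show "\<not> z \<Longrightarrow> tr (x + y) = 0" using T_z[OF x] T_z[OF y] by (simp add: tr_add)
  qed
next
  fix c and x :: "'a M4" assume x: "x \<in> T z s k"
  show "msmult c x \<in> T z s k"
  proof (rule T_I)
    show "\<not> k \<Longrightarrow> \<forall>a b. (msmult c x)$a$b = (msmult c x)$b$a" using T_k[OF x] by simp
    show "\<not> s \<Longrightarrow> (\<forall>a b. a \<noteq> b \<longrightarrow> (msmult c x)$a$b + (msmult c x)$b$a = 0) \<and> (\<forall>a b. (msmult c x)$a$a = (msmult c x)$b$b)"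
    proof -
      assume ns: "\<not> s"
      have "c * x$a$b + c * x$b$a = 0" if "a \<noteq> b" for a b
        using T_s1[OF x ns that] by (simp add: distrib_left[symmetric])
      moreover have "c * x$a$a = c * x$b$b" for a b
        using T_s2[OF x ns, of a b] by simp
      ultimately show ?thesis by simp
    qed
    show "\<not> z \<Longrightarrow> tr (msmult c x) = 0" using T_z[OF x] by (simp add: tr_smult)
  qed
qed

lemma T_mono: assumes "z \<Longrightarrow> z'" "s \<Longrightarrow> s'" "k \<Longrightarrow> k'" shows "T z s k \<subseteq> (T z' s' k' :: 'a::field M4 set)"
proof
  fix x assume x: "x \<in> T z s k"
  show "x \<in> T z' s' k'"
  proof (rule T_I)
    assume "\<not> k'" then have "\<not> k" using assms(3) by blast
    then show "\<forall>a b. x$a$b = x$b$a" using T_k[OF x] by blast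
  next
    assume "\<not> s'" then have ns: "\<not> s" using assms(2) by blast
    show "(\<forall>a b. a \<noteq> b \<longrightarrow> x$a$b + x$b$a = 0) \<and> (\<forall>a b. x$a$a = x$b$b)"
      using T_s1[OF x ns] T_s2[OF x ns] by blast
  next
    assume "\<not> z'" then have "\<not> z" using assms(1) by blast
    then show "tr x = 0" using T_z[OF x] by blast
  qed
qed

lemma decomp: fixes x :: "'a::field_char_0 M4"
  defines "c \<equiv> tr x / 4"
  shows "x = msmult c (mat 1)
   + msmult ((x$1$2 + x$2$1)/2) (G 1 2) + msmult ((x$1$3 + x$3$1)/2) (G 1 3)
   + msmult ((x$1$4 + x$4$1)/2) (G 1 4) + msmult ((x$2$3 + x$3$2)/2) (G 2 3)
   + msmult ((x$2$4 + x$4$2)/2) (G 2 4) + msmult ((x$3$4 + x$4$3)/2) (G 3 4)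
   + msmult (x$2$2 - c) (E 2 2 - E 1 1) + msmult (x$3$3 - c) (E 3 3 - E 1 1)
   + msmult (x$4$4 - c) (E 4 4 - E 1 1)
   + msmult ((x$1$2 - x$2$1)/2) (F 1 2) + msmult ((x$1$3 - x$3$1)/2) (F 1 3)
   + msmult ((x$1$4 - x$4$1)/2) (F 1 4) + msmult ((x$2$3 - x$3$2)/2) (F 2 3)
   + msmult ((x$2$4 - x$4$2)/2) (F 2 4) + msmult ((x$3$4 - x$4$3)/2) (F 3 4)"
  unfolding vec_eq_iff forall_4
  by (simp add: G_def F_def mat_def c_def tr_def sum_4 field_simps)

lemma T_sub:
  fixes x :: "'a::field_char_0 M4"
  assumes V: "msubspace V" and hz: "z \<Longrightarrow> mat 1 \<in> V"
    and hs: "\<And>i j. s \<Longrightarrow> i \<noteq> j \<Longrightarrow> G i j \<in> V"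
    and hs2: "\<And>i j. s \<Longrightarrow> i \<noteq> j \<Longrightarrow> E j j - E i i \<in> V"
    and hk: "\<And>i j. k \<Longrightarrow> i \<noteq> j \<Longrightarrow> F i j \<in> V"
    and x: "x \<in> T z s k"
  shows "x \<in> V"
proof -
  define c where "c = tr x / 4"
  have cz: "c \<noteq> 0 \<Longrightarrow> mat 1 \<in> V" using T_z[OF x] hz unfolding c_def by (cases z) auto
  have sp: "\<And>i j. i \<noteq> j \<Longrightarrow> (x$i$j + x$j$i)/2 \<noteq> 0 \<Longrightarrow> G i j \<in> V"
    using T_s1[OF x] hs by (metis divide_eq_0_iff)
  have kp: "\<And>i j. i \<noteq> j \<Longrightarrow> (x$i$j - x$j$i)/2 \<noteq> 0 \<Longrightarrow> F i j \<in> V"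
    using T_k[OF x] hk by (metis divide_eq_0_iff right_minus_eq)
  have dp: "\<And>j. j \<noteq> 1 \<Longrightarrow> x$j$j - c \<noteq> 0 \<Longrightarrow> E j j - E 1 1 \<in> V"
  proof -
    fix j :: 4 assume j: "j \<noteq> 1" "x$j$j - c \<noteq> 0"
    show "E j j - E 1 1 \<in> V"
    proof (cases s)
      case True then show ?thesis using hs2[of 1 j] j by auto
    next
      case False
      then have e: "x$1$1 = x$j$j" "x$2$2 = x$j$j" "x$3$3 = x$j$j" "x$4$4 = x$j$j"
        using T_s2[OF x] by blast+
      have "tr x = 4 * x$j$j" unfolding tr_def sum_4 e by simp
      then have "c = x$j$j" unfolding c_def by simp
      then show ?thesis using j by simp
    qed
  qed
  have mem: "msmult c (mat 1)
   + msmult ((x$1$2 + x$2$1)/2) (G 1 2) + msmult ((x$1$3 + x$3$1)/2) (G 1 3)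
   + msmult ((x$1$4 + x$4$1)/2) (G 1 4) + msmult ((x$2$3 + x$3$2)/2) (G 2 3)
   + msmult ((x$2$4 + x$4$2)/2) (G 2 4) + msmult ((x$3$4 + x$4$3)/2) (G 3 4)
   + msmult (x$2$2 - c) (E 2 2 - E 1 1) + msmult (x$3$3 - c) (E 3 3 - E 1 1)
   + msmult (x$4$4 - c) (E 4 4 - E 1 1)
   + msmult ((x$1$2 - x$2$1)/2) (F 1 2) + msmult ((x$1$3 - x$3$1)/2) (F 1 3)
   + msmult ((x$1$4 - x$4$1)/2) (F 1 4) + msmult ((x$2$3 - x$3$2)/2) (F 2 3)
   + msmult ((x$2$4 - x$4$2)/2) (F 2 4) + msmult ((x$3$4 - x$4$3)/2) (F 3 4) \<in> V"
    apply (intro ms_add[OF V] msmult_in[OF V])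
    using cz sp kp dp by simp_all
  have eq: "x = msmult c (mat 1)
   + msmult ((x$1$2 + x$2$1)/2) (G 1 2) + msmult ((x$1$3 + x$3$1)/2) (G 1 3)
   + msmult ((x$1$4 + x$4$1)/2) (G 1 4) + msmult ((x$2$3 + x$3$2)/2) (G 2 3)
   + msmult ((x$2$4 + x$4$2)/2) (G 2 4) + msmult ((x$3$4 + x$4$3)/2) (G 3 4)
   + msmult (x$2$2 - c) (E 2 2 - E 1 1) + msmult (x$3$3 - c) (E 3 3 - E 1 1)
   + msmult (x$4$4 - c) (E 4 4 - E 1 1)
   + msmult ((x$1$2 - x$2$1)/2) (F 1 2) + msmult ((x$1$3 - x$3$1)/2) (F 1 3)
   + msmult ((x$1$4 - x$4$1)/2) (F 1 4) + msmult ((x$2$3 - x$3$2)/2) (F 2 3)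
   + msmult ((x$2$4 - x$4$2)/2) (F 2 4) + msmult ((x$3$4 - x$4$3)/2) (F 3 4)" unfolding c_def by (rule decomp)
  show ?thesis by (subst eq) (rule mem)
qed

lemma mat_nth: "mat c $ a $ b = (if a = b then c else 0)" by (simp add: mat_def)
lemma transpose_nth: "transpose A $ a $ b = A $ b $ a" by (simp add: transpose_def)

lemma ite0_mult: "(if P then u else 0) * (v::'a::field) = (if P then u * v else 0)"
  "v * (if P then u else 0) = (if P then v * u else 0)" by auto

definition Q :: "(4 \<Rightarrow> 4) \<Rightarrow> (4 \<Rightarrow> 'a::field) \<Rightarrow> 'a M4" where
  "Q t d = (\<chi> a b. if b = t a then d a else 0)"

lemma Q_left: "(Q t d ** x) $ a $ c = d a * x $ t a $ c"
  by (simp add: Q_def matrix_matrix_mult_def ite0_mult)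

lemma Q_right: "(y ** transpose (Q t d)) $ a $ b = y $ a $ t b * d b"
  by (simp add: Q_def matrix_matrix_mult_def transpose_def ite0_mult)

lemma Q_conj: "(Q t d ** x ** transpose (Q t d)) $ a $ b = d a * d b * x $ t a $ t b"
  by (simp add: Q_right Q_left algebra_simps)

lemma Q_orth: assumes "inj t" "\<forall>a. d a * d a = 1" shows "Q t d \<in> orth4"
proof -
  have "(Q t d ** transpose (Q t d)) $ a $ b = mat 1 $ a $ b" for a b
    unfolding Q_right using assms by (auto simp: Q_def mat_nth inj_eq)
  then show ?thesis unfolding orth4_def by (simp add: vec_eq_iff)
qed

definition sw :: "4 \<Rightarrow> 4 \<Rightarrow> 4 \<Rightarrow> 4" where
  "sw p q a = (if a = p then q else if a = q then p else a)"

lemma sw_inv: "sw p q (sw p q a) = a" by (simp add: sw_def)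
lemma sw_inj: "inj (sw p q)" by (metis injI sw_inv)

lemma perm_ex: assumes "i \<noteq> j" "i' \<noteq> j'"
  shows "\<exists>t::4 \<Rightarrow> 4. inj t \<and> t i = i' \<and> t j = j'"
proof -
  define j1 where "j1 = sw i i' j"
  have "j1 \<noteq> i'" using assms sw_inj[of i i'] unfolding j1_def by (auto simp: sw_def)
  then have "inj (sw j1 j' \<circ> sw i i') \<and> (sw j1 j' \<circ> sw i i') i = i' \<and> (sw j1 j' \<circ> sw i i') j = j'"
    using assms by (auto simp: sw_inj inj_compose j1_def sw_def)
  then show ?thesis by blast
qed

lemma F_nth: "F i j $ a $ b = (E i j $ a $ b - E j i $ a $ b :: 'a::field)"
  by (simp only: F_def vector_minus_component)
lemma G_nth: "G i j $ a $ b = (E i j $ a $ b + E j i $ a $ b :: 'a::field)"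
  by (simp only: G_def vector_add_component)
lemma F_skew: "(F i j :: 'a::field M4) \<in> skew"
  unfolding skew_def mem_Collect_eq vec_eq_iff  
  apply (simp only: transpose_nth vector_uminus_component F_nth E_nth) 
  apply (intro allI)
  subgoal for a b by (cases "a = i"; cases "b = j"; cases "a = j"; cases "b = i"; simp)
  done

definition sg :: "4 \<Rightarrow> 4 \<Rightarrow> 'a::field" where "sg k a = (if a = k then -1 else 1)"

definition mask_eq :: "4 \<Rightarrow> 'a::field M4 \<Rightarrow> 'a M4" where
  "mask_eq k x = (\<chi> a b. if (a = k) = (b = k) then x$a$b else 0)"
definition mask_ne :: "4 \<Rightarrow> 'a::field M4 \<Rightarrow> 'a M4" where
  "mask_ne k x = (\<chi> a b. if (a = k) = (b = k) then 0 else x$a$b)"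

lemma mask_eq_alt: "mask_eq k (x::'a::field_char_0 M4) = msmult (1/2) (x + (\<chi> a b. sg k a * sg k b * x$(id a)$(id b)))"
  by (auto simp: vec_eq_iff mask_eq_def sg_def)
lemma mask_ne_alt: "mask_ne k (x::'a::field_char_0 M4) = msmult (1/2) (x - (\<chi> a b. sg k a * sg k b * x$(id a)$(id b)))"
  by (auto simp: vec_eq_iff mask_ne_def sg_def)

lemma dg_masks: "dg x = mask_eq 1 (mask_eq 2 (mask_eq 3 (mask_eq 4 x)))"
  unfolding vec_eq_iff forall_4 by (simp add: dg_def mask_eq_def)

lemma pair_mask: assumes "i \<noteq> j"
  shows "mask_ne i (mask_ne j x) = msmult (x$i$j) (E i j) + msmult (x$j$i) (E j i)"
  using assms by (auto simp: vec_eq_iff mask_ne_def)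

lemma tr_diff: "tr (x - y) = tr x - tr y" by (simp add: tr_def sum_subtractf)
lemma tr_dg: "tr (dg x) = tr x" by (simp add: tr_def dg_def)
lemma tr_mat: "tr (mat c :: 'a::field M4) = 4 * c" by (simp add: tr_def mat_nth sum_4)

locale LSI =
  fixes L :: "'a::field_char_0 M4 set"
  assumes lsi: "lie_skew_ideal L"
    and inv: "\<forall>P\<in>orth4. \<forall>x\<in>L. P ** x ** transpose P \<in> L"
begin

lemma sub: "msubspace L" using lsi by (simp add: lie_skew_ideal_def)
lemma commL: "x \<in> L \<Longrightarrow> a \<in> skew \<Longrightarrow> comm x a \<in> L"
  using lsi by (simp add: lie_skew_ideal_def)

lemma conjL: assumes "x \<in> L" "inj t" "\<forall>a. d a * d a = 1"
  shows "(\<chi> a b. d a * d b * x$(t a)$(t b)) \<in> L"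
proof -
  have "Q t d ** x ** transpose (Q t d) \<in> L" using inv Q_orth[OF assms(2,3)] assms(1) by blast
  moreover have "Q t d ** x ** transpose (Q t d) = (\<chi> a b. d a * d b * x$(t a)$(t b))"
    by (simp add: vec_eq_iff Q_conj)
  ultimately show ?thesis by simp
qed

lemma permL: assumes "x \<in> L" "inj t" shows "(\<chi> a b. x$(t a)$(t b)) \<in> L"
  using conjL[OF assms, of "\<lambda>_. 1"] by simp

lemma mask_eqL: "x \<in> L \<Longrightarrow> mask_eq k x \<in> L"
  unfolding mask_eq_alt
  by (intro ms_smult[OF sub] ms_add[OF sub] conjL) (auto simp: sg_def)

lemma mask_neL: "x \<in> L \<Longrightarrow> mask_ne k x \<in> L"
  unfolding mask_ne_alt
  by (intro ms_smult[OF sub] ms_diff[OF sub] conjL) (auto simp: sg_def)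

lemma dgL: "x \<in> L \<Longrightarrow> dg x \<in> L"
  unfolding dg_masks by (intro mask_eqL)

lemma pairL: "i \<noteq> j \<Longrightarrow> x \<in> L \<Longrightarrow> msmult (x$i$j) (E i j) + msmult (x$j$i) (E j i) \<in> L"
proof -
  assume "i \<noteq> j" "x \<in> L"
  then have "mask_ne i (mask_ne j x) \<in> L" by (intro mask_neL)
  then show ?thesis using pair_mask[OF \<open>i \<noteq> j\<close>, of x] by simp
qed

lemma G_move: assumes "i \<noteq> j" "i' \<noteq> j'" "G i j \<in> L" shows "G i' j' \<in> L"
proof -
  obtain t where t: "inj t" "t i' = i" "t j' = j" using perm_ex[OF assms(2,1)] by blast
  have "(\<chi> a b. G i j $ (t a) $ (t b)) \<in> L" by (rule permL[OF assms(3) t(1)])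
  moreover have "(\<chi> a b. G i j $ (t a) $ (t b)) = (G i' j' :: 'a M4)"
    unfolding t(2,3)[symmetric] using t(1) by (auto simp: vec_eq_iff G_def inj_eq)
  ultimately show ?thesis by simp
qed

lemma F_move: assumes "i \<noteq> j" "i' \<noteq> j'" "F i j \<in> L" shows "F i' j' \<in> L"
proof -
  obtain t where t: "inj t" "t i' = i" "t j' = j" using perm_ex[OF assms(2,1)] by blast
  have "(\<chi> a b. F i j $ (t a) $ (t b)) \<in> L" by (rule permL[OF assms(3) t(1)])
  moreover have "(\<chi> a b. F i j $ (t a) $ (t b)) = (F i' j' :: 'a M4)"
    unfolding t(2,3)[symmetric] using t(1) by (auto simp: vec_eq_iff F_def inj_eq)
  ultimately show ?thesis by simp
qed

lemma Ed_from_G: assumes "i \<noteq> j" "G i j \<in> L" shows "E j j - E i i \<in> L"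
proof -
  have "msmult 2 (E j j - E i i) \<in> L"
    using commL[OF assms(2) F_skew[of i j]] comm_GF[OF assms(1), where 'a='a] by simp
  from ms_unsmult[OF sub this] show ?thesis by simp
qed

lemma pair_analysis: assumes ij: "i \<noteq> j" and p: "msmult a (E i j) + msmult b (E j i) \<in> L"
  shows "(a + b \<noteq> 0 \<longrightarrow> G i j \<in> L) \<and> (a - b \<noteq> 0 \<longrightarrow> F i j \<in> L)"
proof -
  have G: "G i j \<in> L" if "a + b \<noteq> 0"
  proof -
    have "msmult (a+b) (E j j - E i i) \<in> L"
      using commL[OF p F_skew[of i j]] comm_pair[OF ij, of a b] by simp
    then have Ed: "E j j - E i i \<in> L" using ms_unsmult[OF sub _ that] by blast
    have G2: "msmult (-2) (G i j) \<in> L" using commL[OF Ed F_skew[of i j]] comm_EF[OF ij, where 'a='a] by simp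
    show ?thesis using ms_unsmult[OF sub G2] by simp
  qed
  have "msmult ((a+b)/2) (G i j) \<in> L" by (rule msmult_in[OF sub]) (use G in simp)
  then have "msmult a (E i j) + msmult b (E j i) - msmult ((a+b)/2) (G i j) \<in> L"
    using ms_diff[OF sub p] by blast
  moreover have "msmult a (E i j) + msmult b (E j i) - msmult ((a+b)/2) (G i j) = msmult ((a-b)/2) (F i j)"
    using ij by (auto simp: vec_eq_iff G_def F_def field_simps)
  ultimately have Fm: "msmult ((a-b)/2) (F i j) \<in> L" by simp
  have "a - b \<noteq> 0 \<longrightarrow> F i j \<in> L" using ms_unsmult[OF sub Fm] by simp
  then show ?thesis using G by blast
qed


lemma G_all: "G 1 2 \<in> L \<Longrightarrow> i \<noteq> j \<Longrightarrow> G i j \<in> L"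
  by (rule G_move[of 1 2]) simp_all
lemma F_all: "F 1 2 \<in> L \<Longrightarrow> i \<noteq> j \<Longrightarrow> F i j \<in> L"
  by (rule F_move[of 1 2]) simp_all

lemma L_sup: "x \<in> T (mat 1 \<in> L) (G 1 2 \<in> L) (F 1 2 \<in> L) \<Longrightarrow> x \<in> L"
  by (rule T_sub[OF sub]) (auto intro: G_all F_all Ed_from_G)

lemma diag_eq: assumes x: "x \<in> L" and ns: "G 1 2 \<notin> L" shows "x$a$a = x$b$b"
proof (cases "a = b")
  case False
  have "comm (dg x) (F a b) \<in> L" by (rule commL[OF dgL[OF x] F_skew])
  then have m: "msmult (x$a$a - x$b$b) (G a b) \<in> L" using comm_dg[OF False, of x] by simp
  show ?thesis
  proof (rule ccontr)
    assume "x$a$a \<noteq> x$b$b"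
    then have Gab: "G a b \<in> L" using ms_unsmult[OF sub m] by simp
    show False using G_move[OF False _ Gab, of 1 2] ns by simp
  qed
qed simp

lemma L_sub: assumes x: "x \<in> L" shows "x \<in> T (mat 1 \<in> L) (G 1 2 \<in> L) (F 1 2 \<in> L)"
proof (rule T_I)
  assume nk: "F 1 2 \<notin> L"
  show "\<forall>a b. x$a$b = x$b$a"
  proof (intro allI)
    fix a b :: 4
    show "x$a$b = x$b$a"
    proof (cases "a = b")
      case False
      from pair_analysis[OF False pairL[OF False x]]
      have "x$a$b - x$b$a \<noteq> 0 \<longrightarrow> F a b \<in> L" by blast
      moreover have "F a b \<notin> L" using F_move[OF False, of 1 2] nk by auto
      ultimately show ?thesis by simp
    qed simp
  qed
next
  assume ns: "G 1 2 \<notin> L"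
  have "x$a$b + x$b$a = 0" if ab: "a \<noteq> b" for a b
  proof -
    from pair_analysis[OF ab pairL[OF ab x]]
    have "x$a$b + x$b$a \<noteq> 0 \<longrightarrow> G a b \<in> L" by blast
    moreover have "G a b \<notin> L" using G_move[OF ab, of 1 2] ns by auto
    ultimately show ?thesis by simp
  qed
  then show "(\<forall>a b. a \<noteq> b \<longrightarrow> x$a$b + x$b$a = 0) \<and> (\<forall>a b. x$a$a = x$b$b)"
    using diag_eq[OF x ns] by blast
next
  assume nz: "mat 1 \<notin> L"
  show "tr x = 0"
  proof (rule ccontr)
    assume trx: "tr x \<noteq> 0"
    define c where "c = tr x / 4"
    define y where "y = dg x - msmult c (mat 1)"
    have "y \<in> T False (G 1 2 \<in> L) False"
    proof (rule T_I)
      show "\<forall>a b. y$a$b = y$b$a" by (simp add: y_def dg_def mat_nth)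
      assume ns: "G 1 2 \<notin> L"
      show "(\<forall>a b. a \<noteq> b \<longrightarrow> y$a$b + y$b$a = 0) \<and> (\<forall>a b. y$a$a = y$b$b)"
        using diag_eq[OF x ns] by (simp add: y_def dg_def mat_nth)
    next
      show "tr y = 0" unfolding y_def c_def
        by (simp add: tr_diff tr_smult tr_mat tr_dg)
    qed
    then have "y \<in> T (mat 1 \<in> L) (G 1 2 \<in> L) (F 1 2 \<in> L)" using T_mono[of False "mat 1 \<in> L" "G 1 2 \<in> L" "G 1 2 \<in> L" False "F 1 2 \<in> L"] by blast
    then have "y \<in> L" by (rule L_sup)
    then have "dg x - y \<in> L" using ms_diff[OF sub dgL[OF x]] by blast
    then have cm: "msmult c (mat 1) \<in> L" by (simp add: y_def)
    have "c \<noteq> 0" using trx unfolding c_def by simp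
    then have "mat 1 \<in> L" using ms_unsmult[OF sub cm] by blast
    then show False using nz by blast
  qed
qed

lemma L_eq: "L = T (mat 1 \<in> L) (G 1 2 \<in> L) (F 1 2 \<in> L)"
  using L_sup L_sub by blast

end


lemma neg_self_zero: assumes h: "(y::'a::field_char_0) = - y" shows "y = 0"
proof -
  have "y + y = 0" using h by (metis add.right_inverse)
  then have "2 * y = 0" by (simp only: mult_2)
  then show ?thesis by simp
qed

lemma tp_diff: "transpose ((A::'a::field M4) - B) = transpose A - transpose B"
  by (simp add: vec_eq_iff transpose_nth)
lemma mm_neg_l: "(- (A::'a::field M4)) ** B = - (A ** B)"
  by (simp add: matrix_matrix_mult_def vec_eq_iff sum_negf)
lemma mm_neg_r: "(A::'a::field M4) ** (- B) = - (A ** B)"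
  by (simp add: matrix_matrix_mult_def vec_eq_iff sum_negf)

lemma sym_I: assumes h: "\<And>a b. (M::'a::field M4)$a$b = M$b$a" shows "M \<in> symm"
proof -
  have "transpose M $ a $ b = M $ a $ b" for a b unfolding transpose_nth by (rule h)
  then have "transpose M = M" by (simp add: vec_eq_iff)
  then show ?thesis by (simp add: symm_def)
qed
lemma sym_D: assumes "M \<in> symm" shows "(M::'a::field M4)$a$b = M$b$a"
proof -
  have "transpose M = M" using assms by (simp add: symm_def)
  then have "transpose M $ b $ a = M $ b $ a" by simp
  then show ?thesis by (simp only: transpose_nth)
qed
lemma skew_D: assumes "M \<in> skew" shows "(M::'a::field M4)$b$a = - M$a$b"
proof -
  have "transpose M = - M" using assms by (simp add: skew_def)
  then have "transpose M $ a $ b = (- M) $ a $ b" by simp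
  then show ?thesis by (simp only: transpose_nth vector_uminus_component)
qed

lemma Eii_symm: "(E i i :: 'a::field M4) \<in> symm"
  apply (rule sym_I)
  subgoal for a b by (simp only: E_nth) (cases "a = i"; cases "b = i"; simp)
  done
lemma G_symm: "(G i j :: 'a::field M4) \<in> symm"
  apply (rule sym_I)
  subgoal for a b by (simp only: G_nth E_nth) (cases "a = i"; cases "b = j"; cases "a = j"; cases "b = i"; simp)
  done
lemma Ed_symm: "(E j j - E i i :: 'a::field M4) \<in> symm"
  apply (rule sym_I)
  subgoal for a b by (simp only: E_nth vector_minus_component) (cases "a = i"; cases "b = i"; cases "a = j"; cases "b = j"; simp)
  done
lemma mat_symm: "(mat c :: 'a::field M4) \<in> symm"
  apply (rule sym_I)
  subgoal for a b by (simp only: mat_nth) (cases "a = b"; simp)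
  done

lemma comm_sym_skew: assumes "u \<in> symm" "v \<in> skew"
  shows "transpose (comm u v) = (comm u v :: 'a::field M4)"
proof -
  have "transpose u = u" "transpose v = - v" using assms by (auto simp: symm_def skew_def)
  then show ?thesis
    by (simp add: comm_def tp_diff matrix_transpose_mul mm_neg_l mm_neg_r)
qed

lemma ms_zero_set: "msubspace {0::'a::field M4}"
  by (simp add: msubspace_def vec_eq_iff)
lemma ms_scalars: "msubspace (scalars :: 'a::field M4 set)"
  unfolding msubspace_def scalars_def
proof (intro conjI ballI allI)
  show "(0::'a M4) \<in> range mat" by (metis mat_0 rangeI)
  fix x y :: "'a M4" assume "x \<in> range mat" "y \<in> range mat"
  then obtain a b where "x = mat a" "y = mat b" by blast
  moreover have "mat a + mat b = (mat (a + b) :: 'a M4)" by (simp add: vec_eq_iff mat_nth)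
  ultimately show "x + y \<in> range mat" by simp
next
  fix c and x :: "'a M4" assume "x \<in> range mat"
  then obtain a where "x = mat a" by blast
  moreover have "msmult c (mat a) = (mat (c * a) :: 'a M4)" by (simp add: vec_eq_iff mat_nth)
  ultimately show "msmult c x \<in> range mat" by simp
qed
lemma tp_add: "transpose ((A::'a::field M4) + B) = transpose A + transpose B"
  by (simp add: vec_eq_iff transpose_nth)
lemma tp_smult: "transpose (msmult c (A::'a::field M4)) = msmult c (transpose A)"
  by (simp add: vec_eq_iff transpose_nth)
lemma tp_zero: "transpose (0::'a::field M4) = 0"
  by (simp add: vec_eq_iff transpose_nth)
lemma msmult_neg: "msmult c (- (A::'a::field M4)) = - msmult c A"
  by (simp add: vec_eq_iff)
lemma ms_skew: "msubspace (skew :: 'a::field M4 set)"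
  unfolding msubspace_def skew_def mem_Collect_eq
  by (auto simp: tp_add tp_smult tp_zero msmult_neg)
lemma ms_symm: "msubspace (symm :: 'a::field M4 set)"
  unfolding msubspace_def symm_def mem_Collect_eq
  by (simp only: tp_add tp_smult tp_zero) simp
lemma ms_msum: "msubspace (msum scalars skew :: 'a::field M4 set)"
  unfolding msubspace_def msum_def
proof (intro conjI ballI allI)
  show "(0::'a M4) \<in> {u + v |u v. u \<in> scalars \<and> v \<in> skew}"
    using ms_zero[OF ms_scalars] ms_zero[OF ms_skew] by force
next
  fix x y :: "'a M4" assume "x \<in> {u + v |u v. u \<in> scalars \<and> v \<in> skew}" "y \<in> {u + v |u v. u \<in> scalars \<and> v \<in> skew}"
  then obtain u1 v1 u2 v2 where "x = u1 + v1" "y = u2 + v2" "u1 \<in> scalars" "u2 \<in> scalars" "v1 \<in> skew" "v2 \<in> skew" by blast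
  moreover have "u1 + v1 + (u2 + v2) = (u1 + u2) + (v1 + v2)" by (simp add: algebra_simps)
  ultimately show "x + y \<in> {u + v |u v. u \<in> scalars \<and> v \<in> skew}"
    using ms_add[OF ms_scalars] ms_add[OF ms_skew] by blast
next
  fix c and x :: "'a M4" assume "x \<in> {u + v |u v. u \<in> scalars \<and> v \<in> skew}"
  then obtain u v where "x = u + v" "u \<in> scalars" "v \<in> skew" by blast
  moreover have "msmult c (u + v) = msmult c u + msmult c v" by (simp add: vec_eq_iff algebra_simps)
  ultimately show "msmult c x \<in> {u + v |u v. u \<in> scalars \<and> v \<in> skew}"
    using ms_smult[OF ms_scalars] ms_smult[OF ms_skew] by blast
qed

lemma G_br: assumes "i \<noteq> j" shows "(G i j :: 'a::field M4) \<in> mbracket symm skew"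
proof -
  have "comm (E i i) (F i j) \<in> {comm u v |u v. u \<in> symm \<and> v \<in> skew}"
    using Eii_symm F_skew by blast
  then have "(G i j :: 'a M4) \<in> {comm u v |u v. u \<in> symm \<and> v \<in> skew}"
    by (simp only: comm_EiF[OF assms])
  then show ?thesis unfolding mbracket_def by (rule subsetD[OF mspan_inc])
qed
lemma Ed_br: assumes "i \<noteq> j" shows "(E j j - E i i :: 'a::field_char_0 M4) \<in> mbracket symm skew"
proof -
  have "comm (G i j) (F i j) \<in> (mbracket symm skew :: 'a M4 set)"
    unfolding mbracket_def by (rule subsetD[OF mspan_inc]) (use G_symm F_skew in blast)
  then have "msmult (1/2) (comm (G i j) (F i j)) \<in> (mbracket symm skew :: 'a M4 set)"
    unfolding mbracket_def by (rule ms_smult[OF mspan_subspace])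
  then show ?thesis using comm_GF[OF assms, where 'a='a] by (simp add: msmult_msmult msmult_1)
qed
lemma br_mono: "mbracket symm skew \<subseteq> (mbracket UNIV UNIV :: 'a::field M4 set)"
  unfolding mbracket_def by (rule mspan_mono) blast
lemma F_br: assumes "i \<noteq> j" shows "(F i j :: 'a::field M4) \<in> mbracket UNIV UNIV"
proof -
  have "comm (E i i) (G i j) \<in> {comm u v |u v. u \<in> (UNIV::'a M4 set) \<and> v \<in> UNIV}"
    unfolding mem_Collect_eq by (rule exI[of _ "E i i"], rule exI[of _ "G i j"]) simp
  then have "(F i j :: 'a M4) \<in> {comm u v |u v. u \<in> UNIV \<and> v \<in> UNIV}"
    by (simp only: comm_EG[OF assms])
  then show ?thesis unfolding mbracket_def by (rule subsetD[OF mspan_inc])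
qed

lemma T_sub_set:
  fixes V :: "'a::field_char_0 M4 set"
  assumes V: "msubspace V" and hz: "z \<Longrightarrow> mat 1 \<in> V"
    and hs: "\<And>i j. s \<Longrightarrow> i \<noteq> j \<Longrightarrow> G i j \<in> V"
    and hs2: "\<And>i j. s \<Longrightarrow> i \<noteq> j \<Longrightarrow> E j j - E i i \<in> V"
    and hk: "\<And>i j. k \<Longrightarrow> i \<noteq> j \<Longrightarrow> F i j \<in> V"
  shows "T z s k \<subseteq> V"
proof
  fix x :: "'a M4" assume x: "x \<in> T z s k"
  show "x \<in> V"
    apply (rule T_sub[of V z s k x])
         apply (rule V)
        apply (erule hz)
       apply (erule (1) hs)
      apply (erule (1) hs2)
     apply (erule (1) hk)
    apply (rule x)
    done
qed

lemma T_FFF: "T False False False = {0::'a::field_char_0 M4}"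
proof
  show "T False False False \<subseteq> {0::'a M4}" by (rule T_sub_set[OF ms_zero_set]) simp_all
  show "{0::'a M4} \<subseteq> T False False False" using ms_zero[OF T_subspace] by blast
qed

lemma T_TFF: "T True False False = (scalars :: 'a::field_char_0 M4 set)"
proof
  show "T True False False \<subseteq> (scalars :: 'a M4 set)"
    by (rule T_sub_set[OF ms_scalars]) (simp_all add: scalars_def)
  show "scalars \<subseteq> (T True False False :: 'a M4 set)"
  proof
    fix x :: "'a M4" assume "x \<in> scalars"
    then obtain c where x: "x = mat c" by (auto simp: scalars_def)
    show "x \<in> T True False False" unfolding x by (rule T_I) (simp_all add: mat_nth)
  qed
qed

lemma skew_T: "x \<in> skew \<Longrightarrow> (x :: 'a::field_char_0 M4) \<in> T False False True"
proof -
  assume x: "x \<in> skew"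
  have d: "x$a$a = 0" for a using skew_D[OF x, of a a] by (rule neg_self_zero)
  show ?thesis
  proof (rule T_I)
    have "x$a$b + x$b$a = 0" for a b using skew_D[OF x, of a b] by simp
    then show "(\<forall>a b. a \<noteq> b \<longrightarrow> x$a$b + x$b$a = 0) \<and> (\<forall>a b. x$a$a = x$b$b)"
      using d by simp
    show "tr x = 0" using d by (simp add: tr_def)
  qed simp
qed

lemma T_FFT: "T False False True = (skew :: 'a::field_char_0 M4 set)"
proof
  show "T False False True \<subseteq> (skew :: 'a M4 set)"
    by (rule T_sub_set[OF ms_skew]) (simp_all add: F_skew)
  show "skew \<subseteq> (T False False True :: 'a M4 set)" using skew_T by blast
qed

lemma T_FTF: "T False True False = (mbracket symm skew :: 'a::field_char_0 M4 set)"
proof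
  show "T False True False \<subseteq> (mbracket symm skew :: 'a M4 set)"
    apply (rule T_sub_set)
        apply (unfold mbracket_def)[1]
        apply (rule mspan_subspace)
       apply simp
      apply (rule G_br, assumption)
     apply (rule Ed_br, assumption)
    apply simp
    done
  show "mbracket symm skew \<subseteq> (T False True False :: 'a M4 set)"
    unfolding mbracket_def
  proof (rule mspan_sub[OF T_subspace], rule subsetI)
    fix y :: "'a M4" assume "y \<in> {comm u v |u v. u \<in> symm \<and> v \<in> skew}"
    then obtain u v where y: "y = comm u v" "u \<in> symm" "v \<in> skew" by blast
    show "y \<in> T False True False"
    proof (rule T_I)
      have "transpose y = y" using comm_sym_skew[OF y(2,3)] y(1) by simp
      then show "\<forall>a b. y$a$b = y$b$a" by (metis transpose_nth)
      show "tr y = 0" using y(1) tr_comm by simp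
    qed simp
  qed
qed

lemma T_TTF: "T True True False = (symm :: 'a::field_char_0 M4 set)"
proof
  show "T True True False \<subseteq> (symm :: 'a M4 set)"
    by (rule T_sub_set[OF ms_symm]) (simp_all add: mat_symm G_symm Ed_symm)
  show "symm \<subseteq> (T True True False :: 'a M4 set)"
  proof
    fix x :: "'a M4" assume "x \<in> symm"
    then show "x \<in> T True True False" by (intro T_I) (auto intro: sym_D)
  qed
qed

lemma T_TFT: "T True False True = (msum scalars skew :: 'a::field_char_0 M4 set)"
proof
  have m1: "mat 1 \<in> (msum scalars skew :: 'a M4 set)"
    unfolding msum_def scalars_def using ms_zero[OF ms_skew] by force
  have mF: "F i j \<in> (msum scalars skew :: 'a M4 set)" for i j
    unfolding msum_def scalars_def using F_skew[of i j]
    by (metis (mono_tags, lifting) add_0 mat_0 mem_Collect_eq rangeI)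
  show "T True False True \<subseteq> (msum scalars skew :: 'a M4 set)"
    by (rule T_sub_set[OF ms_msum]) (simp_all add: m1 mF)
  show "msum scalars skew \<subseteq> (T True False True :: 'a M4 set)"
  proof
    fix x :: "'a M4" assume "x \<in> msum scalars skew"
    then obtain u v where x: "x = u + v" "u \<in> scalars" "v \<in> skew" unfolding msum_def by blast
    have "u \<in> T True False True" using T_TFF T_mono[of True True False False False True] x(2) by blast
    moreover have "v \<in> T True False True" using skew_T[OF x(3)] T_mono[of False True False False True True] by blast
    ultimately show "x \<in> T True False True" using ms_add[OF T_subspace] x(1) by blast
  qed
qed

lemma T_FTT: "T False True True = (mbracket UNIV UNIV :: 'a::field_char_0 M4 set)"
proof
  show "T False True True \<subseteq> (mbracket UNIV UNIV :: 'a M4 set)"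
    apply (rule T_sub_set)
        apply (unfold mbracket_def)[1]
        apply (rule mspan_subspace)
       apply simp
      apply (rule subsetD[OF br_mono G_br], assumption)
     apply (rule subsetD[OF br_mono Ed_br], assumption)
    apply (rule F_br, assumption)
    done
  show "mbracket UNIV UNIV \<subseteq> (T False True True :: 'a M4 set)"
    unfolding mbracket_def
  proof (rule mspan_sub[OF T_subspace], rule subsetI)
    fix y :: "'a M4" assume "y \<in> {comm u v |u v. u \<in> UNIV \<and> v \<in> UNIV}"
    then obtain u v where y: "y = comm u v" by blast
    show "y \<in> T False True True"
      by (rule T_I) (simp_all add: y tr_comm)
  qed
qed

lemma T_TTT: "T True True True = (UNIV :: 'a::field_char_0 M4 set)"
  using T_I[of True _ True True] by blast

theorem mainTheorem4:
  fixes L :: "'a::field_char_0 M4 set"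
  assumes "lie_skew_ideal L"
    and "\<forall>P\<in>orth4. \<forall>x\<in>L. P ** x ** transpose P \<in> L"
  shows "L = {0} \<or> L = scalars \<or> L = skew \<or> L = mbracket symm skew \<or> L = symm
    \<or> L = msum scalars skew \<or> L = mbracket UNIV UNIV \<or> L = UNIV"
proof -
  interpret LSI L by unfold_locales (rule assms(1), rule assms(2))
  obtain z s k where L: "L = T z s k" using L_eq by blast
  show ?thesis unfolding L
    by (cases z; cases s; cases k) (simp_all only: T_FFF T_TFF T_FFT T_FTF T_TTF T_TFT T_FTT T_TTT simp_thms)
qed

end
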